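(* There exists a constant $C>0$ such that for any $\epsilon\in(0,\tfrac12]$ there exists a ReLU neural network $\Xi_\epsilon:\mathbb{R}^2\to\mathbb{R}$ such that \[ \sup_{\xi\in[0,2\pi-\epsilon]}|\xi-\Xi_\epsilon(\cos\xi,\sin\xi)|\le\epsilon, \] $\Xi_\epsilon(\cos\xi,\sin\xi)\in[0,2\pi]$ for all $\xi\in[0,2\pi]$, and $\mathrm{depth}(\Xi_\epsilon)\le C\log(\epsilon^{-1})^2$, $\mathrm{width}(\Xi_\epsilon)\le C$.
   Context: ReLU is $\sigma(x)=\max(x,0)$. For a neural network, depth is the number of hidden layers and width the maximal number of neurons in a hidden layer. *)

theory Defs
  imports "HOL-Analysis.Analysis"
begin

type_synonym layer = "real list list \<times> real list"

definition relu :: "real \<Rightarrow> real" where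
  "relu t = max t 0"

definition apply_layer :: "layer \<Rightarrow> real list \<Rightarrow> real list" where
  "apply_layer L x = map2 (\<lambda>row bi. sum_list (map2 (*) row x) + bi) (fst L) (snd L)"

fun realize :: "layer list \<Rightarrow> real list \<Rightarrow> real list" where
  "realize [] x = x"
| "realize [L] x = apply_layer L x"
| "realize (L # Ls) x = realize Ls (map relu (apply_layer L x))"

fun wf_net :: "nat \<Rightarrow> nat \<Rightarrow> layer list \<Rightarrow> bool" where
  "wf_net din dout [] = False"
| "wf_net din dout (L # Ls) =
     (let m = length (snd L) in
        length (fst L) = m \<and> (\<forall>row \<in> set (fst L). length row = din) \<and>
        (if Ls = [] then m = dout else wf_net m dout Ls))"

definition depth :: "layer list \<Rightarrow> nat" where
  "depth Ls = length Ls - 1"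

definition width :: "layer list \<Rightarrow> nat" where
  "width Ls = Max (insert 0 (set (map (\<lambda>L. length (snd L)) (butlast Ls))))"

definition net_eval2 :: "layer list \<Rightarrow> real \<Rightarrow> real \<Rightarrow> real" where
  "net_eval2 N x y = hd (realize N [x, y])"

end

theory Submission
  imports Defs
begin


definition mv :: "real \<Rightarrow> real \<Rightarrow> real \<Rightarrow> real" where
 "mv P Q s = P - relu (relu s - relu (Q - P)) + relu (relu s - relu (P - Q))"

definition hmap :: "real \<Rightarrow> real \<Rightarrow> real \<Rightarrow> real" where
 "hmap c a t = c + max (-t) (min a t)"

lemma mv_le0: "s \<le> 0 \<Longrightarrow> mv P Q s = P"
  by (simp add: mv_def relu_def)

lemma mv_lip: "\<bar>mv P Q s - mv P Q s'\<bar> \<le> \<bar>s - s'\<bar>"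
  by (cases "P \<le> Q") (auto simp: mv_def relu_def max_def)

lemma mv_comp:
  assumes "0 \<le> t"
  shows "mv P Q (hmap c a t - L) = mv (mv P Q (c-L)) (mv P Q (c+a-L)) (t - (relu (L-c) + relu (c-L-\<bar>Q-P\<bar>)))"
proof (cases "P \<le> Q")
  case True
  then show ?thesis using assms
    by (cases "0 \<le> a") (auto simp: mv_def relu_def hmap_def max_def min_def)
next
  case False
  then show ?thesis using assms
    by (cases "0 \<le> a") (auto simp: mv_def relu_def hmap_def max_def min_def)
qed




definition rw :: "real \<Rightarrow> real \<Rightarrow> real \<Rightarrow> real \<Rightarrow> real \<Rightarrow> real list" where
 "rw a b g d l = [a, -a, b, -b, g, -g, d, -d, l, -l]"

definition pre :: "real \<times> real \<times> real \<times> real \<times> real \<Rightarrow> real list" where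
 "pre st = (case st of (X,Y,P,Q,L) \<Rightarrow> [X, -X, Y, -Y, P, -P, Q, -Q, L, -L])"

definition stepM :: "real \<Rightarrow> real \<Rightarrow> real \<Rightarrow> real \<Rightarrow> real \<Rightarrow> real \<Rightarrow> real \<times> real \<times> real \<times> real \<times> real \<Rightarrow> real \<times> real \<times> real \<times> real \<times> real" where
 "stepM c co sn ax ay ab st = (case st of (X,Y,P,Q,L) \<Rightarrow>
    (X * co + Y * sn, relu (Y * co - X * sn) + relu (X * sn - Y * co), mv P Q (c - L), mv P Q (c + (ax * X + ay * Y + ab) - L),
     relu (L-c) + relu (c-L-(relu (Q-P) + relu (P-Q)))))"

definition stepN :: "real \<Rightarrow> real \<Rightarrow> real \<Rightarrow> real \<Rightarrow> real \<Rightarrow> real \<Rightarrow> layer list" where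
 "stepN c co sn ax ay ab =
  [([rw (-sn) co 0 0 0, rw sn (-co) 0 0 0, rw co sn 0 0 0, rw (-co) (-sn) 0 0 0,
     rw 0 0 1 0 0, rw 0 0 (-1) 0 0, rw 0 0 0 1 0, rw 0 0 0 (-1) 0, rw 0 0 0 0 1, rw 0 0 0 0 (-1),
     rw 0 0 (-1) 1 0, rw 0 0 1 (-1) 0, rw 0 0 0 0 (-1), rw ax ay 0 0 (-1), rw 0 0 0 0 1],
    [0,0,0,0,0,0,0,0,0,0,0,0,c, c+ab, -c]),
   ([[0,0,0,0,0,0,0,0,0,0,-1,0,1,0,0],
     [0,0,0,0,0,0,0,0,0,0,0,-1,1,0,0],
     [0,0,0,0,0,0,0,0,0,0,-1,0,0,1,0],
     [0,0,0,0,0,0,0,0,0,0,0,-1,0,1,0],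
     [0,0,0,0,0,0,0,0,-1,1,-1,-1,0,0,0],
     [0,0,0,0,0,0,0,0,0,0,0,0,0,0,1],
     [1,0,0,0,0,0,0,0,0,0,0,0,0,0,0],
     [0,1,0,0,0,0,0,0,0,0,0,0,0,0,0],
     [0,0,1,0,0,0,0,0,0,0,0,0,0,0,0],
     [0,0,0,1,0,0,0,0,0,0,0,0,0,0,0],
     [0,0,0,0,1,0,0,0,0,0,0,0,0,0,0],
     [0,0,0,0,0,1,0,0,0,0,0,0,0,0,0],
     [0,0,0,0,0,0,1,0,0,0,0,0,0,0,0],
     [0,0,0,0,0,0,0,1,0,0,0,0,0,0,0]],
    [0,0,0,0,c,0,0,0,0,0,0,0,0,0]),
   ([[0,0,0,0,0,0,0,0,1,-1,0,0,0,0],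
     [0,0,0,0,0,0,0,0,-1,1,0,0,0,0],
     [0,0,0,0,0,0,1,1,0,0,0,0,0,0],
     [0,0,0,0,0,0,-1,-1,0,0,0,0,0,0],
     [-1,1,0,0,0,0,0,0,0,0,1,-1,0,0],
     [1,-1,0,0,0,0,0,0,0,0,-1,1,0,0],
     [0,0,-1,1,0,0,0,0,0,0,1,-1,0,0],
     [0,0,1,-1,0,0,0,0,0,0,-1,1,0,0],
     [0,0,0,0,1,1,0,0,0,0,0,0,0,0],
     [0,0,0,0,-1,-1,0,0,0,0,0,0,0,0]],
    [0,0,0,0,0,0,0,0,0,0])]"

lemma relu_pm: "relu x - relu (-x) = x" by (simp add: relu_def)
lemma relu_relu: "relu (relu x) = relu x" by (simp add: relu_def)
lemma relu_abs: "relu x + relu (-x) = \<bar>x\<bar>" by (simp add: relu_def)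

lemma relu_neg: "relu (-x) = relu x - x" by (simp add: relu_def)
lemma relu_neg2: "relu (- a - b) = relu (a + b) - a - b" by (simp add: relu_def)
lemma relu_rm: "relu (relu x - x) = relu x - x" by (simp add: relu_def)

lemma stepN_correct:
  "realize (stepN c co sn ax ay ab) (map relu (pre (X,Y,P,Q,L))) = pre (stepM c co sn ax ay ab (X,Y,P,Q,L))"
  by (simp add: stepN_def pre_def stepM_def apply_layer_def rw_def relu_relu mv_def relu_neg relu_neg2 relu_rm algebra_simps)




lemma realize_append:
  "A \<noteq> [] \<Longrightarrow> B \<noteq> [] \<Longrightarrow> realize (A @ B) x = realize B (map relu (realize A x))"
proof (induction A arbitrary: x)
  case Nil then show ?case by simp
next
  case (Cons L A)
  show ?case
  proof (cases "A = []")
    case True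
    then show ?thesis using Cons.prems by (cases B) auto
  next
    case False
    then obtain L' A' where "A = L' # A'" by (cases A) auto
    then show ?thesis using Cons False by (cases B) auto
  qed
qed

lemma wf_nonempty: "wf_net a b N \<Longrightarrow> N \<noteq> []" by auto

lemma wf_append:
  "wf_net a m A \<Longrightarrow> wf_net m b B \<Longrightarrow> wf_net a b (A @ B)"
proof (induction A arbitrary: a)
  case Nil then show ?case by simp
next
  case (Cons L A)
  have "B \<noteq> []" using Cons.prems(2) by auto
  show ?case
  proof (cases "A = []")
    case True
    then show ?thesis using Cons.prems \<open>B \<noteq> []\<close> by (auto simp: Let_def)
  next
    case False
    then show ?thesis using Cons by (auto simp: Let_def)
  qed
qed

lemma width_le: "(\<forall>L\<in>set N. length (snd L) \<le> w) \<Longrightarrow> width N \<le> w"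
  unfolding width_def by (auto dest: in_set_butlastD)

definition cc :: "nat \<Rightarrow> real" where "cc j = pi / 2^j"

definition axf :: "real \<Rightarrow> nat \<Rightarrow> real" where
  "axf K j = (if j = 0 then -pi else -2 * sin (cc j))"
definition ayf :: "real \<Rightarrow> nat \<Rightarrow> real" where
  "ayf K j = (if j = 0 then -K else 2 * cos (cc j))"
definition abf :: "real \<Rightarrow> nat \<Rightarrow> real" where
  "abf K j = (if j = 0 then -pi else 0)"

definition netj :: "real \<Rightarrow> nat \<Rightarrow> layer list" where
  "netj K j = stepN (cc j) (cos (cc j)) (sin (cc j)) (axf K j) (ayf K j) (abf K j)"

definition stM :: "real \<Rightarrow> nat \<Rightarrow> real \<times> real \<times> real \<times> real \<times> real \<Rightarrow> real \<times> real \<times> real \<times> real \<times> real" where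
  "stM K j = stepM (cc j) (cos (cc j)) (sin (cc j)) (axf K j) (ayf K j) (abf K j)"

fun stepsN :: "real \<Rightarrow> nat \<Rightarrow> layer list" where
  "stepsN K 0 = []"
| "stepsN K (Suc m) = stepsN K m @ netj K m"

fun stt :: "real \<Rightarrow> real \<Rightarrow> real \<Rightarrow> nat \<Rightarrow> real \<times> real \<times> real \<times> real \<times> real" where
  "stt K x y 0 = (x, y, 0, 2*pi, 0)"
| "stt K x y (Suc m) = stM K m (stt K x y m)"

definition initL :: layer where
  "initL = ([[1,0],[-1,0],[0,1],[0,-1],[0,0],[0,0],[0,0],[0,0],[0,0],[0,0]],
            [0,0,0,0,0,0,2*pi,-2*pi,0,0])"

definition finL :: "layer list" where
  "finL = [([[0,0,0,0,1,-1,0,0,0,0],[0,0,0,0,1,-1,0,0,0,0]], [0, -2*pi]), ([[1,-1]],[0])]"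

definition fullN :: "real \<Rightarrow> nat \<Rightarrow> layer list" where
  "fullN K n = (initL # stepsN K n) @ finL"

lemma netj_ne: "netj K j \<noteq> []" by (simp add: netj_def stepN_def)

lemma realize_stt: "realize (initL # stepsN K m) [x,y] = pre (stt K x y m)"
proof (induction m)
  case 0 then show ?case by (simp add: initL_def apply_layer_def pre_def)
next
  case (Suc m)
  obtain X Y P Q L where e: "stt K x y m = (X,Y,P,Q,L)" by (cases "stt K x y m") auto
  have "realize (initL # stepsN K (Suc m)) [x,y] = realize (netj K m) (map relu (realize (initL # stepsN K m) [x,y]))"
    using realize_append[of "initL # stepsN K m" "netj K m"] netj_ne by simp
  also have "\<dots> = pre (stt K x y (Suc m))"
    using Suc e by (simp add: netj_def stM_def stepN_correct)
  finally show ?case .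
qed

lemma eval_full:
  "net_eval2 (fullN K n) x y = (case stt K x y n of (X,Y,P,Q,L) \<Rightarrow> relu P - relu (P - 2*pi))"
proof -
  obtain X Y P Q L where e: "stt K x y n = (X,Y,P,Q,L)" by (cases "stt K x y n") auto
  have "realize (fullN K n) [x,y] = realize finL (map relu (realize (initL # stepsN K n) [x,y]))"
    unfolding fullN_def by (rule realize_append) (auto simp: finL_def)
  then show ?thesis using e
    by (simp add: net_eval2_def realize_stt finL_def apply_layer_def pre_def relu_neg relu_relu algebra_simps)
qed

lemma wf_netj: "wf_net 10 10 (netj K j)"
  by (simp add: netj_def stepN_def rw_def)

lemma wf_steps: "wf_net 2 10 (initL # stepsN K m)"
proof (induction m)
  case 0 then show ?case by (simp add: initL_def)
next
  case (Suc m) then show ?case using wf_append[OF Suc wf_netj] by simp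
qed

lemma wf_full: "wf_net 2 1 (fullN K n)"
  unfolding fullN_def by (rule wf_append[OF wf_steps]) (simp add: finL_def)

lemma len_steps: "length (stepsN K m) = 3 * m"
  by (induction m) (auto simp: netj_def stepN_def)

lemma depth_full: "depth (fullN K n) = 3 * n + 2"
  by (simp add: depth_def fullN_def len_steps finL_def)

lemma width_full: "width (fullN K n) \<le> 15"
proof (rule width_le, intro ballI)
  fix L assume "L \<in> set (fullN K n)"
  moreover have "\<forall>L\<in>set (stepsN K m). length (snd L) \<le> 15" for m
    by (induction m) (auto simp: netj_def stepN_def)
  ultimately show "length (snd L) \<le> 15"
    by (auto simp: fullN_def initL_def finL_def)
qed




lemma sin_half:
  fixes z :: real
  assumes "0 \<le> z" "z \<le> pi/2"
  shows "z/2 \<le> sin z"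
proof (cases "z \<le> pi/3")
  case True
  let ?f = "\<lambda>x. sin x - x/2"
  have "?f 0 \<le> ?f z"
  proof (rule DERIV_nonneg_imp_nondecreasing[OF assms(1)])
    fix u assume u: "0 \<le> u" "u \<le> z"
    have "cos (pi/3) \<le> cos u"
      by (rule cos_monotone_0_pi_le) (use u True in auto)
    then have "cos u - 1/2 \<ge> 0" by (simp add: cos_60)
    moreover have "DERIV ?f u :> cos u - 1/2"
      by (auto intro!: derivative_eq_intros)
    ultimately show "\<exists>y. DERIV ?f u :> y \<and> y \<ge> 0" by blast
  qed
  then show ?thesis by simp
next
  case False
  have "sin (pi/3) \<le> sin z"
    by (rule sin_monotone_2pi_le) (use False assms in auto)
  moreover have "1.7 \<le> sqrt 3"
    by (rule real_le_rsqrt) (simp add: power2_eq_square)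
  moreover have "pi \<le> 3.2" using pi_approx by simp
  ultimately show ?thesis using assms by (simp add: sin_60)
qed

lemma lvl0:
  fixes \<xi> \<epsilon> K :: real
  assumes e: "0 < \<epsilon>" "\<epsilon> \<le> 1/2" and K: "K = 24/\<epsilon>" and x: "0 \<le> \<xi>" "\<xi> \<le> 2*pi - \<epsilon>"
  defines "a \<equiv> -pi * cos \<xi> - K * sin \<xi> - pi"
  shows "(0 \<le> \<xi> - pi \<longrightarrow> \<xi> - pi \<le> a) \<and> (\<xi> - pi < 0 \<longrightarrow> a \<le> \<xi> - pi)"
proof -
  have Ke: "K * \<epsilon> = 24" using e K by simp
  have Kp: "K > 0" using e K by simp
  have "K * \<epsilon> \<le> K * (1/2)" using e Kp by (intro mult_left_mono) auto
  then have K48: "K \<ge> 48" using Ke by simp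
  have p4: "pi < 4" by (rule pi_less_4)
  consider "\<xi> \<le> pi/2" | "pi/2 < \<xi> \<and> \<xi> < pi" | "pi \<le> \<xi> \<and> \<xi> \<le> 3*pi/2" | "3*pi/2 < \<xi>" by linarith
  then show ?thesis
  proof cases
    case 1
    have "0 \<le> cos \<xi>" by (rule cos_ge_zero) (use 1 x in auto)
    moreover have "0 \<le> sin \<xi>" by (rule sin_ge_zero) (use 1 x in auto)
    ultimately have "pi * cos \<xi> \<ge> 0" "K * sin \<xi> \<ge> 0" using K48 by simp_all
    then have "a \<le> -pi" unfolding a_def by linarith
    moreover have "\<xi> < pi" using 1 pi_gt_zero by linarith
    ultimately show ?thesis using x by auto
  next
    case 2
    define w where "w = pi - \<xi>"
    have w: "0 \<le> w" "w \<le> pi/2" using 2 by (auto simp: w_def)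
    have "sin \<xi> = sin w" by (simp add: w_def sin_diff)
    then have s: "w/2 \<le> sin \<xi>" using sin_half[OF w] by simp
    have "K * (w/2) \<le> K * sin \<xi>" using s K48 by (intro mult_left_mono) auto
    moreover have "pi * (-1) \<le> pi * cos \<xi>" using cos_ge_minus_one[of \<xi>]
      by (intro mult_left_mono) auto
    moreover have "48 * (w/2) \<le> K * (w/2)" using w K48 by (intro mult_right_mono) auto
    moreover have "-pi * cos \<xi> = -(pi * cos \<xi>)" by simp
    ultimately have "a \<le> -w" unfolding a_def using w by linarith
    then show ?thesis using 2 by (auto simp: w_def)
  next
    case 3
    define u where "u = \<xi> - pi"
    have u: "0 \<le> u" "u \<le> pi/2" using 3 by (auto simp: u_def)
    have sx: "sin \<xi> = - sin u" and cx: "cos \<xi> = - cos u" by (simp_all add: u_def sin_diff cos_diff)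
    have su: "u/2 \<le> sin u" using sin_half[OF u] .
    have s0: "0 \<le> sin u" and c0: "0 \<le> cos u"
      using sin_ge_zero[of u] cos_ge_zero[of u] u by auto
    have "sin u * sin u \<le> sin u * 1" using s0 sin_le_one[of u] by (intro mult_left_mono) auto
    moreover have "cos u * cos u \<le> cos u * 1" using c0 cos_le_one[of u] by (intro mult_left_mono) auto
    moreover have "sin u * sin u + cos u * cos u = 1" using sin_cos_squared_add[of u]
      by (simp add: power2_eq_square)
    ultimately have "1 \<le> sin u + cos u" by linarith
    then have "pi * (sin u + cos u - 1) \<ge> 0" by simp
    moreover have "a = (K - pi) * sin u + pi * (sin u + cos u - 1)"
      unfolding a_def sx cx by (simp add: algebra_simps)
    ultimately have "a \<ge> (K - pi) * sin u" by linarith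
    moreover have "(K - pi) * sin u \<ge> (K - pi) * (u/2)" using su K48 p4 by (intro mult_left_mono) auto
    moreover have "(K - pi) * (u/2) \<ge> 2 * (u/2)" using u K48 p4 by (intro mult_right_mono) auto
    ultimately show ?thesis using 3 by (auto simp: u_def)
  next
    case 4
    define u where "u = \<xi> - pi"
    have sx: "sin \<xi> = - sin u" and cx: "cos \<xi> = - cos u" by (simp_all add: u_def sin_diff cos_diff)
    have v: "\<epsilon> \<le> pi - u" "pi - u \<le> pi/2" using 4 x by (auto simp: u_def)
    have "sin u = sin (pi - u)" by (simp add: sin_diff)
    then have "(pi - u)/2 \<le> sin u" using sin_half[of "pi - u"] v e by auto
    moreover have "\<epsilon>/2 \<le> (pi - u)/2" using v(1) by (intro divide_right_mono) auto
    ultimately have "\<epsilon>/2 \<le> sin u" by linarith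
    then have "K * (\<epsilon>/2) \<le> K * sin u" using K48 by (intro mult_left_mono) auto
    then have "12 \<le> K * sin u" using Ke by simp
    moreover have "pi * (-1) \<le> pi * cos u" using cos_ge_minus_one[of u]
      by (intro mult_left_mono) auto
    ultimately have "a \<ge> 12 - 2*pi" unfolding a_def sx cx by simp
    moreover have "u \<le> pi" using x e by (simp add: u_def)
    ultimately show ?thesis using p4 4 by (auto simp: u_def)
  qed
qed




fun th :: "real \<Rightarrow> nat \<Rightarrow> real" where
  "th \<xi> 0 = \<xi>"
| "th \<xi> (Suc j) = \<bar>th \<xi> j - cc j\<bar>"

lemma cc_Suc: "cc (Suc j) = cc j / 2" by (simp add: cc_def)
lemma cc_pos: "0 < cc j" by (simp add: cc_def)
lemma cc_le: "cc j \<le> pi"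
  unfolding cc_def by (simp add: divide_le_eq)
lemma cc_le2: "1 \<le> j \<Longrightarrow> cc j \<le> pi/2"
proof -
  assume "1 \<le> j"
  then have "(2::real)^1 \<le> 2^j" by (intro power_increasing) auto
  then show ?thesis unfolding cc_def by (intro divide_left_mono) auto
qed

lemma th_bound:
  assumes "0 \<le> \<xi>" "\<xi> \<le> 2*pi"
  shows "0 \<le> th \<xi> j \<and> th \<xi> j \<le> 2 * cc j"
proof (induction j)
  case 0 then show ?case using assms by (simp add: cc_def)
next
  case (Suc j) then show ?case by (auto simp: cc_Suc)
qed

lemma sin_abs_eq: "\<bar>d\<bar> \<le> pi \<Longrightarrow> sin \<bar>d\<bar> = \<bar>sin d\<bar>"
proof (cases "0 \<le> d")
  case True
  assume "\<bar>d\<bar> \<le> pi"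
  then show ?thesis using True sin_ge_zero[of d] by simp
next
  case False
  assume "\<bar>d\<bar> \<le> pi"
  then have "0 \<le> sin (-d)" using False by (intro sin_ge_zero) auto
  then show ?thesis using False by simp
qed

lemma relu_sum_abs: "relu x + relu (- x) = \<bar>x\<bar>" by (simp add: relu_def)

lemma stt_XY:
  assumes "0 \<le> \<xi>" "\<xi> \<le> 2*pi"
  shows "\<exists>P Q L. stt K (cos \<xi>) (sin \<xi>) j = (cos (th \<xi> j), sin (th \<xi> j), P, Q, L) \<and> 0 \<le> L"
proof (induction j)
  case 0 then show ?case by simp
next
  case (Suc j)
  then obtain P Q L where e: "stt K (cos \<xi>) (sin \<xi>) j = (cos (th \<xi> j), sin (th \<xi> j), P, Q, L)" by blast
  define d where "d = th \<xi> j - cc j"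
  have b: "0 \<le> th \<xi> j" "th \<xi> j \<le> 2 * cc j" using th_bound[OF assms] by auto
  have "\<bar>d\<bar> \<le> pi" using b cc_le[of j] by (auto simp: d_def)
  then have s: "sin (th \<xi> (Suc j)) = \<bar>sin d\<bar>" by (simp add: d_def sin_abs_eq)
  have c: "cos (th \<xi> (Suc j)) = cos d" by (simp add: d_def)
  have "relu (sin (th \<xi> j) * cos (cc j) - cos (th \<xi> j) * sin (cc j)) +
        relu (cos (th \<xi> j) * sin (cc j) - sin (th \<xi> j) * cos (cc j)) = \<bar>sin d\<bar>"
    using relu_sum_abs[of "sin (th \<xi> j) * cos (cc j) - cos (th \<xi> j) * sin (cc j)"]
    by (simp add: d_def sin_diff)
  then show ?case using e s c
    by (simp add: stM_def stepM_def d_def cos_diff relu_def)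
qed

definition phi :: "real \<Rightarrow> real \<Rightarrow> nat \<Rightarrow> real \<Rightarrow> real" where
  "phi K \<xi> j t = (case stt K (cos \<xi>) (sin \<xi>) j of (X,Y,P,Q,L) \<Rightarrow> mv P Q (t - L))"

definition aval :: "real \<Rightarrow> real \<Rightarrow> nat \<Rightarrow> real" where
  "aval K \<xi> j = axf K j * cos (th \<xi> j) + ayf K j * sin (th \<xi> j) + abf K j"

lemma phi_comp:
  assumes "0 \<le> \<xi>" "\<xi> \<le> 2*pi" "0 \<le> t"
  shows "phi K \<xi> (Suc j) t = phi K \<xi> j (hmap (cc j) (aval K \<xi> j) t)"
proof -
  obtain P Q L where e: "stt K (cos \<xi>) (sin \<xi>) j = (cos (th \<xi> j), sin (th \<xi> j), P, Q, L)"
    using stt_XY[OF assms(1,2)] by blast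
  have r: "relu (Q - P) + relu (P - Q) = \<bar>Q - P\<bar>" using relu_sum_abs[of "Q - P"] by simp
  show ?thesis
    using e mv_comp[OF assms(3), of P Q "cc j" "aval K \<xi> j" L]
    by (simp add: phi_def stM_def stepM_def aval_def r)
qed

lemma hmap_exact: "(0 \<le> d \<longrightarrow> d \<le> a) \<Longrightarrow> (d < 0 \<longrightarrow> a \<le> d) \<Longrightarrow> hmap c a \<bar>d\<bar> = c + d"
  by (auto simp: hmap_def max_def min_def)

lemma exact_step:
  assumes e: "0 < \<epsilon>" "\<epsilon> \<le> 1/2" and K: "K = 24/\<epsilon>" and x: "0 \<le> \<xi>" "\<xi> \<le> 2*pi - \<epsilon>"
  shows "hmap (cc j) (aval K \<xi> j) (th \<xi> (Suc j)) = th \<xi> j"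
proof -
  define d where "d = th \<xi> j - cc j"
  have x2: "\<xi> \<le> 2*pi" using x e by linarith
  have cond: "(0 \<le> d \<longrightarrow> d \<le> aval K \<xi> j) \<and> (d < 0 \<longrightarrow> aval K \<xi> j \<le> d)"
  proof (cases "j = 0")
    case True
    then have "d = \<xi> - pi" "aval K \<xi> j = -pi * cos \<xi> - K * sin \<xi> - pi"
      by (simp_all add: d_def cc_def aval_def axf_def ayf_def abf_def)
    then show ?thesis using lvl0[OF e K x] by simp
  next
    case False
    have b: "0 \<le> th \<xi> j" "th \<xi> j \<le> 2 * cc j" using th_bound[OF x(1) x2] by auto
    have c2: "cc j \<le> pi/2" using False cc_le2[of j] by simp
    have a: "aval K \<xi> j = 2 * sin d"
      using False by (simp add: aval_def axf_def ayf_def abf_def d_def sin_diff algebra_simps)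
    show ?thesis
    proof (cases "0 \<le> d")
      case True
      then have "d/2 \<le> sin d" using b c2 by (intro sin_half) (auto simp: d_def)
      then show ?thesis using a True by auto
    next
      case False
      then have "(-d)/2 \<le> sin (-d)" using b c2 by (intro sin_half) (auto simp: d_def)
      then show ?thesis using a False by auto
    qed
  qed
  have "hmap (cc j) (aval K \<xi> j) \<bar>d\<bar> = cc j + d" using cond by (intro hmap_exact) auto
  then show ?thesis by (simp add: d_def)
qed

lemma phi_th:
  assumes e: "0 < \<epsilon>" "\<epsilon> \<le> 1/2" and K: "K = 24/\<epsilon>" and x: "0 \<le> \<xi>" "\<xi> \<le> 2*pi - \<epsilon>"
  shows "phi K \<xi> j (th \<xi> j) = \<xi>"
proof (induction j)
  case 0
  have "\<xi> \<le> 2*pi" using x e by linarith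
  then show ?case using x by (simp add: phi_def mv_def relu_def)
next
  case (Suc j)
  have x2: "\<xi> \<le> 2*pi" using x e by linarith
  have "0 \<le> th \<xi> (Suc j)" by simp
  then have "phi K \<xi> (Suc j) (th \<xi> (Suc j)) = phi K \<xi> j (hmap (cc j) (aval K \<xi> j) (th \<xi> (Suc j)))"
    using phi_comp[OF x(1) x2] by blast
  also have "\<dots> = phi K \<xi> j (th \<xi> j)" using exact_step[OF e K x] by simp
  finally show ?case using Suc by simp
qed

lemma final_err:
  assumes e: "0 < \<epsilon>" "\<epsilon> \<le> 1/2" and K: "K = 24/\<epsilon>" and x: "0 \<le> \<xi>" "\<xi> \<le> 2*pi - \<epsilon>"
  shows "\<bar>(case stt K (cos \<xi>) (sin \<xi>) n of (X,Y,P,Q,L) \<Rightarrow> P) - \<xi>\<bar> \<le> 2 * cc n"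
proof -
  have x2: "\<xi> \<le> 2*pi" using x e by linarith
  obtain P Q L where st: "stt K (cos \<xi>) (sin \<xi>) n = (cos (th \<xi> n), sin (th \<xi> n), P, Q, L)" "0 \<le> L"
    using stt_XY[OF x(1) x2] by blast
  have "phi K \<xi> n 0 = P" using st by (simp add: phi_def mv_le0)
  moreover have "\<bar>phi K \<xi> n 0 - phi K \<xi> n (th \<xi> n)\<bar> \<le> \<bar>0 - th \<xi> n\<bar>"
    using st mv_lip[of P Q "- L" "th \<xi> n - L"] by (simp add: phi_def)
  ultimately show ?thesis using phi_th[OF e K x, of n] th_bound[OF x(1) x2, of n] st by simp
qed




lemma clamp_err: "0 \<le> \<xi> \<Longrightarrow> \<xi> \<le> 2*pi \<Longrightarrow> \<bar>\<xi> - (relu P - relu (P - 2*pi))\<bar> \<le> \<bar>P - \<xi>\<bar>"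
  by (auto simp: relu_def)

lemma clamp_range: "relu P - relu (P - 2*pi) \<in> {0..2*pi}"
  by (auto simp: relu_def max_def) (insert pi_gt_zero, linarith)

theorem mainTheorem8:
  shows "\<exists>C::real. C > 0 \<and>
    (\<forall>\<epsilon>::real. 0 < \<epsilon> \<and> \<epsilon> \<le> 1/2 \<longrightarrow>
      (\<exists>N. wf_net 2 1 N \<and>
        (\<forall>\<xi> \<in> {0..2*pi - \<epsilon>}. \<bar>\<xi> - net_eval2 N (cos \<xi>) (sin \<xi>)\<bar> \<le> \<epsilon>) \<and>
        (\<forall>\<xi> \<in> {0..2*pi}. net_eval2 N (cos \<xi>) (sin \<xi>) \<in> {0..2*pi}) \<and>
        real (depth N) \<le> C * (ln (1/\<epsilon>))^2 \<and>
        real (width N) \<le> C))"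
proof (intro exI[of _ 100] conjI allI impI)
  show "(0::real) < 100" by simp
  fix \<epsilon> :: real assume "0 < \<epsilon> \<and> \<epsilon> \<le> 1/2"
  then have e: "0 < \<epsilon>" "\<epsilon> \<le> 1/2" by auto
  define K where "K = 24/\<epsilon>"
  define l where "l = ln (1/\<epsilon>)"
  define m where "m = nat \<lceil>2*l\<rceil>"
  define n where "n = m + 3"
  have "2 \<le> 1/\<epsilon>" using e by (simp add: field_simps)
  then have "ln 2 \<le> l" unfolding l_def using e by (subst ln_le_cancel_iff) auto
  then have l23: "2/3 \<le> l" using ln2_ge_two_thirds by linarith
  have m1: "2*l \<le> real m" unfolding m_def using l23 by linarith
  have m2: "real m \<le> 2*l + 1" unfolding m_def using l23 by linarith
  have "(2::real)^m = exp (real m * ln 2)"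
    by (simp add: powr_realpow[symmetric] powr_def)
  moreover have "exp l \<le> exp (real m * ln 2)"
  proof -
    have "real m * ln 2 \<ge> (2*l) * (2/3)"
      using m1 ln2_ge_two_thirds l23 by (intro mult_mono) auto
    then show ?thesis using l23 by simp
  qed
  moreover have "exp l = 1/\<epsilon>" unfolding l_def using e by simp
  ultimately have pw: "1/\<epsilon> \<le> 2^m" by simp
  have ccn: "2 * cc n \<le> \<epsilon>"
  proof -
    have "2 * cc n = pi / (4 * 2^m)" by (simp add: cc_def n_def power_add)
    also have "\<dots> \<le> pi / (4 * (1/\<epsilon>))" using pw e by (intro divide_left_mono) auto
    also have "\<dots> = (pi/4) * \<epsilon>" by simp
    also have "\<dots> \<le> \<epsilon>" using pi_less_4 e by (simp add: mult_le_cancel_right1)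
    finally show ?thesis .
  qed
  show "\<exists>N. wf_net 2 1 N \<and>
        (\<forall>\<xi> \<in> {0..2*pi - \<epsilon>}. \<bar>\<xi> - net_eval2 N (cos \<xi>) (sin \<xi>)\<bar> \<le> \<epsilon>) \<and>
        (\<forall>\<xi> \<in> {0..2*pi}. net_eval2 N (cos \<xi>) (sin \<xi>) \<in> {0..2*pi}) \<and>
        real (depth N) \<le> 100 * (ln (1/\<epsilon>))^2 \<and>
        real (width N) \<le> 100"
  proof (intro exI[of _ "fullN K n"] conjI ballI)
    show "wf_net 2 1 (fullN K n)" by (rule wf_full)
  next
    fix \<xi> assume "\<xi> \<in> {0..2*pi - \<epsilon>}"
    then have x: "0 \<le> \<xi>" "\<xi> \<le> 2*pi - \<epsilon>" by auto
    obtain X Y P Q L where st: "stt K (cos \<xi>) (sin \<xi>) n = (X,Y,P,Q,L)"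
      by (cases "stt K (cos \<xi>) (sin \<xi>) n") auto
    have "\<bar>P - \<xi>\<bar> \<le> 2 * cc n" using final_err[OF e K_def x, of n] st by simp
    moreover have "\<bar>\<xi> - (relu P - relu (P - 2*pi))\<bar> \<le> \<bar>P - \<xi>\<bar>"
      using x e by (intro clamp_err) auto
    ultimately show "\<bar>\<xi> - net_eval2 (fullN K n) (cos \<xi>) (sin \<xi>)\<bar> \<le> \<epsilon>"
      using ccn st by (simp add: eval_full)
  next
    fix \<xi> assume "\<xi> \<in> {0..2*pi}"
    obtain X Y P Q L where st: "stt K (cos \<xi>) (sin \<xi>) n = (X,Y,P,Q,L)"
      by (cases "stt K (cos \<xi>) (sin \<xi>) n") auto
    show "net_eval2 (fullN K n) (cos \<xi>) (sin \<xi>) \<in> {0..2*pi}"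
      using st clamp_range[of P] by (simp add: eval_full)
  next
    have A: "l * l \<ge> (2/3) * l" using l23 by (intro mult_right_mono) auto
    have B: "real (depth (fullN K n)) = 3 * real m + 11" by (simp add: depth_full n_def)
    have C: "(ln (1/\<epsilon>))^2 = l * l" by (simp add: l_def power2_eq_square)
    show "real (depth (fullN K n)) \<le> 100 * (ln (1/\<epsilon>))^2"
      unfolding B C using A m2 l23 by linarith
  next
    show "real (width (fullN K n)) \<le> 100" using width_full[of K n] by simp
  qed
qed


end
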